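(* Let $f:\mathbb{R}^n\to\mathbb{R}$ be differentiable with $L_f$-Lipschitz continuous gradient, let $g:\mathbb{R}^n\to\mathbb{R}\cup\{+\infty\}$ be proper, lower semicontinuous, $\gamma_g$-prox-bounded and $\rho$-weakly convex, and assume $\operatorname{argmin}(f+g)\neq\emptyset$. Let $x^\star$ be a critical point and $\gamma>0$ sufficiently small, and suppose that $f$ is of class $C^3$ locally around $x^\star$ and $\operatorname{prox}_{\gamma g}$ is of class $C^1$ locally around $x^\star-\gamma\nabla f(x^\star)$. Then there exists a neighborhood $U_{x^\star}$ of $x^\star$ on which $\hat\partial^2\varphi_\gamma(x)$ is a singleton $\{B(x)\}$ with $B(x)=\gamma^{-1}Q_\gamma(x)\big(I-P_\gamma(x)Q_\gamma(x)\big)$, and for all $x\in U_{x^\star}$, $$\|\nabla^2\varphi_\gamma(x)-B(x)\|=\|M_\gamma(x)\|\le\gamma\|\nabla^3 f(x)\|\,\|R_\gamma(x)\|.$$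
   Context: $g$ is $\rho$-weakly convex if $g+\frac\rho2\|\cdot\|^2$ is convex; $\gamma_g$-prox-bounded means $g+\frac1{2\gamma}\|\cdot\|^2$ is bounded below for each $\gamma\in(0,\gamma_g)$. $\operatorname{prox}_{\gamma g}(x)=\operatorname{argmin}_z\{g(z)+\frac1{2\gamma}\|z-x\|^2\}$, $T_\gamma(x)=\operatorname{prox}_{\gamma g}(x-\gamma\nabla f(x))$, $R_\gamma(x)=\gamma^{-1}(x-T_\gamma(x))$; $x^\star$ is critical if $x^\star\in T_\gamma(x^\star)$ for some $\gamma\in(0,\gamma_g)$. Forward-backward envelope: $\varphi_\gamma(x)=\inf_u\{f(x)+\langle\nabla f(x),u-x\rangle+g(u)+\frac1{2\gamma}\|u-x\|^2\}$. $Q_\gamma(x)=I-\gamma\nabla^2 f(x)$, $P_\gamma(x)=J\operatorname{prox}_{\gamma g}(x-\gamma\nabla f(x))$, and $M_\gamma(x)$ is the matrix with entries $[M_\gamma(x)]_{i,k}=-\gamma\sum_j\frac{\partial[\nabla^2f(x)]_{i,j}}{\partial x_k}[R_\gamma(x)]_j$. The generalized Hessian is $\hat\partial^2\varphi_\gamma(x)=\{\gamma^{-1}\mathcal Q(I-\mathcal P\mathcal Q):\mathcal P\in\partial_C\operatorname{prox}_{\gamma g}(x-\gamma\nabla f(x)),\ \mathcal Q\in\partial_C(x-\gamma\nabla f(x))\}$, where $\partial_C$ denotes the Clarke generalized Jacobian. *)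

theory Defs
  imports "HOL-Analysis.Analysis"
begin

text \<open>Ambient space R^n is rendered as real^'n (n = CARD('n)).\<close>

definition grad :: "(real^'n \<Rightarrow> real) \<Rightarrow> real^'n \<Rightarrow> real^'n" where
  "grad f x = (\<chi> i. frechet_derivative f (at x) (axis i 1))"

definition hess :: "(real^'n \<Rightarrow> real) \<Rightarrow> real^'n \<Rightarrow> real^'n^'n" where
  "hess f x = jacobian (grad f) (at x)"

text \<open>third f x i j k = d [hess f]_{ij} / d x_k\<close>
definition third :: "(real^'n \<Rightarrow> real) \<Rightarrow> real^'n \<Rightarrow> 'n \<Rightarrow> 'n \<Rightarrow> 'n \<Rightarrow> real" where
  "third f x i j k = jacobian (\<lambda>y. hess f y $ i) (at x) $ j $ k"

definition C3_on :: "(real^'n) set \<Rightarrow> (real^'n \<Rightarrow> real) \<Rightarrow> bool" where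
  "C3_on S f \<longleftrightarrow> open S \<and>
     (\<forall>x\<in>S. f differentiable at x) \<and>
     (\<forall>x\<in>S. grad f differentiable at x) \<and>
     (\<forall>x\<in>S. hess f differentiable at x) \<and>
     (\<forall>i j k. continuous_on S (\<lambda>x. third f x i j k))"

definition C1_on :: "(real^'n) set \<Rightarrow> (real^'n \<Rightarrow> real^'m) \<Rightarrow> bool" where
  "C1_on S F \<longleftrightarrow> open S \<and> (\<forall>x\<in>S. F differentiable at x) \<and>
     continuous_on S (\<lambda>x. jacobian F (at x))"

definition proper_fun :: "(real^'n \<Rightarrow> ereal) \<Rightarrow> bool" where
  "proper_fun g \<longleftrightarrow> (\<forall>x. g x \<noteq> -\<infinity>) \<and> (\<exists>x. g x < \<infinity>)"

definition lsc_fun :: "(real^'n \<Rightarrow> ereal) \<Rightarrow> bool" where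
  "lsc_fun g \<longleftrightarrow> (\<forall>x. g x \<le> Liminf (at x) g)"

definition ereal_convex :: "(real^'n \<Rightarrow> ereal) \<Rightarrow> bool" where
  "ereal_convex h \<longleftrightarrow> convex {(x, r::real). h x \<le> ereal r}"

definition weakly_convex :: "real \<Rightarrow> (real^'n \<Rightarrow> ereal) \<Rightarrow> bool" where
  "weakly_convex \<rho> g \<longleftrightarrow> ereal_convex (\<lambda>x. g x + ereal (\<rho> / 2 * (norm x)\<^sup>2))"

definition prox_bounded :: "real \<Rightarrow> (real^'n \<Rightarrow> ereal) \<Rightarrow> bool" where
  "prox_bounded \<gamma>g g \<longleftrightarrow> 0 < \<gamma>g \<and>
     (\<forall>\<gamma>. 0 < \<gamma> \<and> \<gamma> < \<gamma>g \<longrightarrow>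
        (\<exists>c::real. \<forall>x. ereal c \<le> g x + ereal ((norm x)\<^sup>2 / (2 * \<gamma>))))"

definition proxset :: "real \<Rightarrow> (real^'n \<Rightarrow> ereal) \<Rightarrow> real^'n \<Rightarrow> (real^'n) set" where
  "proxset \<gamma> g x = {z. \<forall>w. g z + ereal ((norm (z - x))\<^sup>2 / (2 * \<gamma>))
                             \<le> g w + ereal ((norm (w - x))\<^sup>2 / (2 * \<gamma>))}"

definition prox :: "real \<Rightarrow> (real^'n \<Rightarrow> ereal) \<Rightarrow> real^'n \<Rightarrow> real^'n" where
  "prox \<gamma> g x = (THE z. z \<in> proxset \<gamma> g x)"

definition Tset :: "real \<Rightarrow> (real^'n \<Rightarrow> real) \<Rightarrow> (real^'n \<Rightarrow> ereal) \<Rightarrow> real^'n \<Rightarrow> (real^'n) set" where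
  "Tset \<gamma> f g x = proxset \<gamma> g (x - \<gamma> *\<^sub>R grad f x)"

definition Tfb :: "real \<Rightarrow> (real^'n \<Rightarrow> real) \<Rightarrow> (real^'n \<Rightarrow> ereal) \<Rightarrow> real^'n \<Rightarrow> real^'n" where
  "Tfb \<gamma> f g x = prox \<gamma> g (x - \<gamma> *\<^sub>R grad f x)"

definition Rfb :: "real \<Rightarrow> (real^'n \<Rightarrow> real) \<Rightarrow> (real^'n \<Rightarrow> ereal) \<Rightarrow> real^'n \<Rightarrow> real^'n" where
  "Rfb \<gamma> f g x = (1 / \<gamma>) *\<^sub>R (x - Tfb \<gamma> f g x)"

definition critical :: "real \<Rightarrow> (real^'n \<Rightarrow> real) \<Rightarrow> (real^'n \<Rightarrow> ereal) \<Rightarrow> real^'n \<Rightarrow> bool" where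
  "critical \<gamma>g f g xs \<longleftrightarrow> (\<exists>\<gamma>. 0 < \<gamma> \<and> \<gamma> < \<gamma>g \<and> xs \<in> Tset \<gamma> f g xs)"

definition fbe :: "real \<Rightarrow> (real^'n \<Rightarrow> real) \<Rightarrow> (real^'n \<Rightarrow> ereal) \<Rightarrow> real^'n \<Rightarrow> ereal" where
  "fbe \<gamma> f g x = (INF u. ereal (f x + grad f x \<bullet> (u - x) + (norm (u - x))\<^sup>2 / (2 * \<gamma>)) + g u)"

definition fbe_real :: "real \<Rightarrow> (real^'n \<Rightarrow> real) \<Rightarrow> (real^'n \<Rightarrow> ereal) \<Rightarrow> real^'n \<Rightarrow> real" where
  "fbe_real \<gamma> f g x = real_of_ereal (fbe \<gamma> f g x)"

definition Qm :: "real \<Rightarrow> (real^'n \<Rightarrow> real) \<Rightarrow> real^'n \<Rightarrow> real^'n^'n" where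
  "Qm \<gamma> f x = mat 1 - \<gamma> *\<^sub>R hess f x"

definition Pm :: "real \<Rightarrow> (real^'n \<Rightarrow> real) \<Rightarrow> (real^'n \<Rightarrow> ereal) \<Rightarrow> real^'n \<Rightarrow> real^'n^'n" where
  "Pm \<gamma> f g x = jacobian (prox \<gamma> g) (at (x - \<gamma> *\<^sub>R grad f x))"

definition Mm :: "real \<Rightarrow> (real^'n \<Rightarrow> real) \<Rightarrow> (real^'n \<Rightarrow> ereal) \<Rightarrow> real^'n \<Rightarrow> real^'n^'n" where
  "Mm \<gamma> f g x = (\<chi> i k. - \<gamma> * (\<Sum>j\<in>UNIV. third f x i j k * Rfb \<gamma> f g x $ j))"

definition clarke_jac :: "(real^'n \<Rightarrow> real^'m) \<Rightarrow> real^'n \<Rightarrow> (real^'n^'m) set" where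
  "clarke_jac F x = convex hull
     {A. \<exists>xs. xs \<longlonglongrightarrow> x \<and> (\<forall>k. F differentiable at (xs k)) \<and>
              (\<lambda>k. jacobian F (at (xs k))) \<longlonglongrightarrow> A}"

definition gen_hess :: "real \<Rightarrow> (real^'n \<Rightarrow> real) \<Rightarrow> (real^'n \<Rightarrow> ereal) \<Rightarrow> real^'n \<Rightarrow> (real^'n^'n) set" where
  "gen_hess \<gamma> f g x = {(1 / \<gamma>) *\<^sub>R (Q ** (mat 1 - P ** Q)) | P Q.
      P \<in> clarke_jac (prox \<gamma> g) (x - \<gamma> *\<^sub>R grad f x) \<and>
      Q \<in> clarke_jac (\<lambda>y. y - \<gamma> *\<^sub>R grad f y) x}"

definition mat_norm :: "real^'n^'n \<Rightarrow> real" where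
  "mat_norm A = onorm (\<lambda>v. A *v v)"

definition tensor3_norm :: "('n::finite \<Rightarrow> 'n \<Rightarrow> 'n \<Rightarrow> real) \<Rightarrow> real" where
  "tensor3_norm T = (SUP (u, v, w) \<in> {(u::real^'n, v::real^'n, w::real^'n).
        norm u \<le> 1 \<and> norm v \<le> 1 \<and> norm w \<le> 1}.
        \<bar>\<Sum>i\<in>UNIV. \<Sum>j\<in>UNIV. \<Sum>k\<in>UNIV. T i j k * u $ i * v $ j * w $ k\<bar>)"

end

theory Submission
  imports Defs
begin


lemma jac_hasderiv:
  fixes F :: "real^'n \<Rightarrow> real^'m"
  assumes "F differentiable at y"
  shows "(F has_derivative (\<lambda>h. jacobian F (at y) *v h)) (at y)"
  using assms jacobian_works by blast

lemma jac_eq: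
  fixes F :: "real^'n \<Rightarrow> real^'m"
  assumes "(F has_derivative (\<lambda>h. A *v h)) (at y)"
  shows "jacobian F (at y) = A"
  using assms frechet_derivative_at jacobian_def matrix_of_matrix_vector_mul by metis

lemma bb_mv: "bounded_bilinear (\<lambda>(A::real^'n^'m) (v::real^'n). A *v v)"
proof
  fix a a' :: "real^'n^'m" and b b' :: "real^'n" and r :: real
  show "(a + a') *v b = a *v b + a' *v b" by (simp add: matrix_vector_mult_add_rdistrib)
  show "a *v (b + b') = a *v b + a *v b'" by (simp add: matrix_vector_right_distrib)
  show "(r *\<^sub>R a) *v b = r *\<^sub>R (a *v b)"
    by (simp add: vec_eq_iff matrix_vector_mult_def sum_distrib_left mult.assoc)
  show "a *v (r *\<^sub>R b) = r *\<^sub>R (a *v b)"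
    by (simp add: vec_eq_iff matrix_vector_mult_def sum_distrib_left mult.left_commute)
next
  show "\<exists>K. \<forall>a b. norm ((a::real^'n^'m) *v b) \<le> norm a * norm b * K"
  proof (intro exI allI)
    fix a :: "real^'n^'m" and b :: "real^'n"
    have "norm (a *v b) \<le> (\<Sum>i\<in>UNIV. \<bar>(a *v b) $ i\<bar>)" by (rule norm_le_l1_cart)
    also have "\<dots> \<le> (\<Sum>i::'m\<in>UNIV. norm a * norm b)"
    proof (rule sum_mono)
      fix i
      have "\<bar>(a *v b) $ i\<bar> \<le> norm (a $ i) * norm b"
        by (simp add: matrix_mult_dot Cauchy_Schwarz_ineq2)
      also have "\<dots> \<le> norm a * norm b"
        by (rule mult_right_mono[OF Finite_Cartesian_Product.norm_nth_le norm_ge_zero])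
      finally show "\<bar>(a *v b) $ i\<bar> \<le> norm a * norm b" .
    qed
    also have "\<dots> = norm a * norm b * real CARD('m)" by simp
    finally show "norm (a *v b) \<le> norm a * norm b * real CARD('m)" .
  qed
qed



lemma mv_axis: "((A::real^'n^'m) *v axis l 1) $ k = A $ k $ l"
  by (simp add: matrix_vector_mult_def axis_def if_distrib cong: if_cong)

lemma sym_core:
  fixes f :: "real^'n \<Rightarrow> real" and G :: "real^'n \<Rightarrow> real^'n" and H :: "real^'n \<Rightarrow> real^'n^'n"
  assumes fd: "\<And>y. y \<in> ball x \<delta> \<Longrightarrow> (f has_derivative (\<lambda>h. G y \<bullet> h)) (at y)"
    and gd: "\<And>y. y \<in> ball x \<delta> \<Longrightarrow> (G has_derivative (\<lambda>h. H y *v h)) (at y)"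
    and hb: "\<And>y. y \<in> ball x \<delta> \<Longrightarrow> \<bar>H y $ k $ l - c\<bar> \<le> \<epsilon>"
    and t: "0 < t" "2 * t < \<delta>"
  shows "\<bar>f (x + t *\<^sub>R axis k 1 + t *\<^sub>R axis l 1) - f (x + t *\<^sub>R axis k 1)
           - f (x + t *\<^sub>R axis l 1) + f x - t\<^sup>2 * c\<bar> \<le> \<epsilon> * t\<^sup>2"
proof -
  define u :: "real^'n" where "u = axis k 1"
  define v :: "real^'n" where "v = axis l 1"
  have nu: "norm u = 1" "norm v = 1" by (simp_all add: u_def v_def)
  have inb: "x + s *\<^sub>R u + r *\<^sub>R v \<in> ball x \<delta>" if "0 \<le> s" "s \<le> t" "0 \<le> r" "r \<le> t" for s r
  proof -
    have "norm (s *\<^sub>R u + r *\<^sub>R v) \<le> norm (s *\<^sub>R u) + norm (r *\<^sub>R v)" by (rule norm_triangle_ineq)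
    also have "\<dots> = s + r" using nu that by simp
    finally have "norm (s *\<^sub>R u + r *\<^sub>R v) < \<delta>" using t that by simp
    moreover have "dist x (x + s *\<^sub>R u + r *\<^sub>R v) = norm (s *\<^sub>R u + r *\<^sub>R v)"
      by (simp add: dist_norm norm_minus_commute add.assoc add.commute)
    ultimately show ?thesis by simp
  qed
  have step1: "\<bar>G (x + s *\<^sub>R u + t *\<^sub>R v) $ k - G (x + s *\<^sub>R u) $ k - t * c\<bar> \<le> \<epsilon> * t"
    if s: "0 \<le> s" "s \<le> t" for s
  proof -
    define \<theta> where "\<theta> r = G (x + s *\<^sub>R u + r *\<^sub>R v) $ k" for r
    have "\<exists>r\<in>{0..t}. \<theta> t - \<theta> 0 = (\<lambda>h. (h *\<^sub>R (H (x + s *\<^sub>R u + r *\<^sub>R v) *v v)) $ k) (t - 0)"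
    proof (rule mvt_very_simple)
      fix r assume r: "0 \<le> r" "r \<le> t"
      have l1: "((\<lambda>r. x + s *\<^sub>R u + r *\<^sub>R v) has_derivative (\<lambda>h. h *\<^sub>R v)) (at r within {0..t})"
        by (auto intro!: derivative_eq_intros)
      have l2: "(G has_derivative (\<lambda>h. H (x + s *\<^sub>R u + r *\<^sub>R v) *v h)) (at (x + s *\<^sub>R u + r *\<^sub>R v))"
        using gd inb[OF s r] by blast
      have "((\<lambda>r. G (x + s *\<^sub>R u + r *\<^sub>R v)) has_derivative (\<lambda>h. H (x + s *\<^sub>R u + r *\<^sub>R v) *v (h *\<^sub>R v))) (at r within {0..t})"
        by (rule has_derivative_compose[OF l1 l2])
      then have "((\<lambda>r. G (x + s *\<^sub>R u + r *\<^sub>R v) $ k) has_derivative (\<lambda>h. (H (x + s *\<^sub>R u + r *\<^sub>R v) *v (h *\<^sub>R v)) $ k)) (at r within {0..t})"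
        by (rule bounded_linear.has_derivative[OF bounded_linear_vec_nth])
      then show "(\<theta> has_derivative (\<lambda>h. (h *\<^sub>R (H (x + s *\<^sub>R u + r *\<^sub>R v) *v v)) $ k)) (at r within {0..t})"
        unfolding \<theta>_def by (simp add: matrix_vector_mult_scaleR)
    qed (use t in simp)
    then obtain r where r: "0 \<le> r" "r \<le> t" and eq: "\<theta> t - \<theta> 0 = t * H (x + s *\<^sub>R u + r *\<^sub>R v) $ k $ l"
      by (auto simp: v_def mv_axis)
    have "\<bar>\<theta> t - \<theta> 0 - t * c\<bar> = t * \<bar>H (x + s *\<^sub>R u + r *\<^sub>R v) $ k $ l - c\<bar>"
      using eq t by (simp add: abs_mult right_diff_distrib[symmetric])
    also have "\<dots> \<le> t * \<epsilon>" using hb[OF inb[OF s r]] t by (simp add: mult_left_mono)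
    finally show ?thesis by (simp add: \<theta>_def mult.commute)
  qed
  define \<phi> where "\<phi> s = f (x + s *\<^sub>R u + t *\<^sub>R v) - f (x + s *\<^sub>R u)" for s
  have "\<exists>s\<in>{0..t}. \<phi> t - \<phi> 0 = (\<lambda>h. G (x + s *\<^sub>R u + t *\<^sub>R v) \<bullet> (h *\<^sub>R u) - G (x + s *\<^sub>R u) \<bullet> (h *\<^sub>R u)) (t - 0)"
  proof (rule mvt_very_simple)
    fix s assume s: "0 \<le> s" "s \<le> t"
    have l1: "((\<lambda>s. x + s *\<^sub>R u + t *\<^sub>R v) has_derivative (\<lambda>h. h *\<^sub>R u)) (at s within {0..t})"
      by (auto intro!: derivative_eq_intros)
    have l1': "((\<lambda>s. x + s *\<^sub>R u) has_derivative (\<lambda>h. h *\<^sub>R u)) (at s within {0..t})"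
      by (auto intro!: derivative_eq_intros)
    have l2: "(f has_derivative (\<lambda>h. G (x + s *\<^sub>R u + t *\<^sub>R v) \<bullet> h)) (at (x + s *\<^sub>R u + t *\<^sub>R v))"
      using fd inb[OF s] t by simp
    have l2': "(f has_derivative (\<lambda>h. G (x + s *\<^sub>R u) \<bullet> h)) (at (x + s *\<^sub>R u))"
      using fd inb[OF s, of 0] t by simp
    show "(\<phi> has_derivative (\<lambda>h. G (x + s *\<^sub>R u + t *\<^sub>R v) \<bullet> (h *\<^sub>R u) - G (x + s *\<^sub>R u) \<bullet> (h *\<^sub>R u))) (at s within {0..t})"
      unfolding \<phi>_def by (rule has_derivative_diff[OF has_derivative_compose[OF l1 l2] has_derivative_compose[OF l1' l2']])
  qed (use t in simp)
  then obtain s where s: "0 \<le> s" "s \<le> t" and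
    eq: "\<phi> t - \<phi> 0 = t * (G (x + s *\<^sub>R u + t *\<^sub>R v) $ k - G (x + s *\<^sub>R u) $ k)"
    by (auto simp: u_def inner_axis right_diff_distrib)
  have "\<bar>\<phi> t - \<phi> 0 - t\<^sup>2 * c\<bar> = t * \<bar>G (x + s *\<^sub>R u + t *\<^sub>R v) $ k - G (x + s *\<^sub>R u) $ k - t * c\<bar>"
  proof -
    have "\<phi> t - \<phi> 0 - t\<^sup>2 * c = t * (G (x + s *\<^sub>R u + t *\<^sub>R v) $ k - G (x + s *\<^sub>R u) $ k - t * c)"
      using eq by (simp add: power2_eq_square algebra_simps)
    then show ?thesis using t by (simp add: abs_mult)
  qed
  also have "\<dots> \<le> t * (\<epsilon> * t)" using step1[OF s] t by (simp add: mult_left_mono)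
  finally show ?thesis by (simp add: \<phi>_def u_def v_def power2_eq_square algebra_simps)
qed

lemma comp_le_norm: "\<bar>(A::real^'n^'m) $ i $ j\<bar> \<le> norm A"
proof -
  have "\<bar>A $ i $ j\<bar> \<le> norm (A $ i)" by (metis Finite_Cartesian_Product.norm_nth_le real_norm_def)
  also have "\<dots> \<le> norm A" by (rule Finite_Cartesian_Product.norm_nth_le)
  finally show ?thesis .
qed

lemma grad_hasderiv:
  fixes f :: "real^'n \<Rightarrow> real"
  assumes "f differentiable at y"
  shows "(f has_derivative (\<lambda>h. grad f y \<bullet> h)) (at y)"
proof -
  let ?D = "frechet_derivative f (at y)"
  have d: "(f has_derivative ?D) (at y)" using assms frechet_derivative_works by blast
  then have lin: "linear ?D" using has_derivative_linear by blast
  have "?D h = grad f y \<bullet> h" for h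
  proof -
    have "h = (\<Sum>i\<in>UNIV. h $ i *\<^sub>R axis i 1)"
      by (metis (no_types) basis_expansion scalar_mult_eq_scaleR)
    then have "?D h = ?D (\<Sum>i\<in>UNIV. h $ i *\<^sub>R axis i 1)" by simp
    also have "\<dots> = (\<Sum>i\<in>UNIV. ?D (h $ i *\<^sub>R axis i 1))" by (rule linear_sum[OF lin])
    also have "\<dots> = (\<Sum>i\<in>UNIV. h $ i * ?D (axis i 1))" by (simp add: linear_scale[OF lin])
    also have "\<dots> = grad f y \<bullet> h" by (simp add: grad_def inner_vec_def mult.commute)
    finally show ?thesis .
  qed
  then have "?D = (\<lambda>h. grad f y \<bullet> h)" by blast
  with d show ?thesis by simp
qed

lemma hess_hasderiv:
  fixes f :: "real^'n \<Rightarrow> real"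
  assumes "grad f differentiable at y"
  shows "(grad f has_derivative (\<lambda>h. hess f y *v h)) (at y)"
  using assms jacobian_works unfolding hess_def by blast

lemma hess_sym:
  fixes f :: "real^'n \<Rightarrow> real"
  assumes S: "open S" "x \<in> S" and fd: "\<forall>y\<in>S. f differentiable at y"
    and gd: "\<forall>y\<in>S. grad f differentiable at y" and hc: "isCont (hess f) x"
  shows "hess f x $ k $ l = hess f x $ l $ k"
proof (rule ccontr)
  assume ne: "hess f x $ k $ l \<noteq> hess f x $ l $ k"
  define d where "d = \<bar>hess f x $ k $ l - hess f x $ l $ k\<bar>"
  have d0: "d > 0" using ne by (simp add: d_def)
  define \<epsilon> where "\<epsilon> = d / 4"
  have e0: "\<epsilon> > 0" using d0 by (simp add: \<epsilon>_def)
  obtain \<delta>1 where d1: "\<delta>1 > 0" "ball x \<delta>1 \<subseteq> S" using S open_contains_ball by blast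
  obtain \<delta>2 where d2: "\<delta>2 > 0" "\<And>y. dist y x < \<delta>2 \<Longrightarrow> dist (hess f y) (hess f x) < \<epsilon>"
    using hc e0 unfolding continuous_at_eps_delta by metis
  define \<delta> where "\<delta> = min \<delta>1 \<delta>2"
  have dpos: "\<delta> > 0" using d1 d2 by (simp add: \<delta>_def)
  have inS: "y \<in> S" if "y \<in> ball x \<delta>" for y using that d1 by (auto simp: \<delta>_def)
  have hb: "\<bar>hess f y $ i $ j - hess f x $ i $ j\<bar> \<le> \<epsilon>" if "y \<in> ball x \<delta>" for y i j
  proof -
    have "dist y x < \<delta>2" using that by (simp add: \<delta>_def dist_commute)
    then have "norm (hess f y - hess f x) < \<epsilon>" using d2 by (simp add: dist_norm)
    moreover have "\<bar>(hess f y - hess f x) $ i $ j\<bar> \<le> norm (hess f y - hess f x)" by (rule comp_le_norm)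
    ultimately show ?thesis by simp
  qed
  define t where "t = \<delta> / 4"
  have t: "0 < t" "2 * t < \<delta>" using dpos by (auto simp: t_def)
  have fd': "\<And>y. y \<in> ball x \<delta> \<Longrightarrow> (f has_derivative (\<lambda>h. grad f y \<bullet> h)) (at y)"
    using fd inS grad_hasderiv by blast
  have gd': "\<And>y. y \<in> ball x \<delta> \<Longrightarrow> (grad f has_derivative (\<lambda>h. hess f y *v h)) (at y)"
    using gd inS hess_hasderiv by blast
  have A: "\<bar>f (x + t *\<^sub>R axis k 1 + t *\<^sub>R axis l 1) - f (x + t *\<^sub>R axis k 1)
           - f (x + t *\<^sub>R axis l 1) + f x - t\<^sup>2 * hess f x $ k $ l\<bar> \<le> \<epsilon> * t\<^sup>2"
    by (rule sym_core[OF fd' gd' hb t])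
  have B: "\<bar>f (x + t *\<^sub>R axis l 1 + t *\<^sub>R axis k 1) - f (x + t *\<^sub>R axis l 1)
           - f (x + t *\<^sub>R axis k 1) + f x - t\<^sup>2 * hess f x $ l $ k\<bar> \<le> \<epsilon> * t\<^sup>2"
    by (rule sym_core[OF fd' gd' hb t])
  have sw: "x + t *\<^sub>R axis l 1 + t *\<^sub>R axis k 1 = x + t *\<^sub>R axis k 1 + t *\<^sub>R axis l 1"
    by (simp add: algebra_simps)
  have "t\<^sup>2 * d \<le> 2 * \<epsilon> * t\<^sup>2"
  proof -
    have "t\<^sup>2 * d = \<bar>t\<^sup>2 * hess f x $ k $ l - t\<^sup>2 * hess f x $ l $ k\<bar>"
      by (simp add: d_def abs_mult right_diff_distrib[symmetric])
    also have "\<dots> \<le> 2 * \<epsilon> * t\<^sup>2" using A B unfolding sw by linarith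
    finally show ?thesis .
  qed
  moreover have "2 * \<epsilon> * t\<^sup>2 < t\<^sup>2 * d" using t d0 by (simp add: \<epsilon>_def)
  ultimately show False by linarith
qed



lemma lsc_ev:
  fixes g :: "real^'n \<Rightarrow> ereal"
  assumes "lsc_fun g" "ereal b < g w"
  shows "eventually (\<lambda>y. ereal b < g y) (nhds w)"
proof -
  have "ereal b < Liminf (at w) g" using assms unfolding lsc_fun_def by (meson less_le_trans)
  then have "eventually (\<lambda>y. ereal b < g y) (at w)" by (rule less_LiminfD)
  then show ?thesis using assms(2) by (simp add: eventually_nhds_conv_at)
qed

lemma G_ev:
  fixes g :: "real^'n \<Rightarrow> ereal" and q :: "real^'n \<Rightarrow> real"
  assumes lsc: "lsc_fun g" and qc: "isCont q w" and lt: "ereal a < g w + ereal (q w)"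
  shows "eventually (\<lambda>y. ereal a < g y + ereal (q y)) (nhds w)"
proof -
  have "ereal (a - q w) < g w" using lt by (cases "g w") auto
  then obtain b where b: "ereal (a - q w) < ereal b" "ereal b < g w" using ereal_dense2 by blast
  have e1: "eventually (\<lambda>y. ereal b < g y) (nhds w)" by (rule lsc_ev[OF lsc b(2)])
  have "(q \<longlongrightarrow> q w) (at w)" using qc by (simp add: isCont_def)
  then have "eventually (\<lambda>y. a - b < q y) (at w)" using b(1) by (intro order_tendstoD(1)) auto
  then have e2: "eventually (\<lambda>y. a - b < q y) (nhds w)" using b(1) by (simp add: eventually_nhds_conv_at)
  show ?thesis
  proof (rule eventually_mono[OF eventually_conj[OF e1 e2]])
    fix y assume "ereal b < g y \<and> a - b < q y"
    then show "ereal a < g y + ereal (q y)" by (cases "g y") auto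
  qed
qed

lemma G_lim:
  fixes g :: "real^'n \<Rightarrow> ereal" and q :: "real^'n \<Rightarrow> real"
  assumes lsc: "lsc_fun g" and qc: "isCont q l" and lim: "X \<longlonglongrightarrow> l"
    and ev: "eventually (\<lambda>n. g (X n) + ereal (q (X n)) \<le> ereal a) sequentially"
  shows "g l + ereal (q l) \<le> ereal a"
proof (rule ccontr)
  assume "\<not> ?thesis"
  then have "ereal a < g l + ereal (q l)" by simp
  from G_ev[OF lsc qc this] obtain T where T: "open T" "l \<in> T" "\<forall>y\<in>T. ereal a < g y + ereal (q y)"
    unfolding eventually_nhds by blast
  have "eventually (\<lambda>n. X n \<in> T) sequentially" by (rule topological_tendstoD[OF lim T(1,2)])
  then have "eventually (\<lambda>n. False) sequentially"
    using ev by eventually_elim (use T(3) in force)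
  then show False by simp
qed

lemma norm_young: "(norm (w::real^'n))\<^sup>2 \<le> 3/2 * (norm (w - z))\<^sup>2 + 3 * (norm z)\<^sup>2"
proof -
  have "norm w \<le> norm (w - z) + norm z" by (metis diff_add_cancel norm_triangle_ineq)
  then have "(norm w)\<^sup>2 \<le> (norm (w - z) + norm z)\<^sup>2" by (simp add: power_mono)
  also have "\<dots> \<le> 3/2 * (norm (w - z))\<^sup>2 + 3 * (norm z)\<^sup>2"
    using zero_le_power2[of "norm (w - z) - 2 * norm z"]
    by (simp add: power2_eq_square algebra_simps)
  finally show ?thesis .
qed

lemma par_mid: "(norm ((1/2) *\<^sub>R a + (1/2) *\<^sub>R (b::real^'n)))\<^sup>2
   = (norm a)\<^sup>2 / 2 + (norm b)\<^sup>2 / 2 - (norm (a - b))\<^sup>2 / 4"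
  unfolding power2_norm_eq_inner by (simp add: inner_simps inner_commute field_simps)

lemma prox_unique:
  fixes g :: "real^'n \<Rightarrow> ereal"
  assumes proper: "proper_fun g" and wc: "weakly_convex \<rho> g" and \<gamma>: "0 < \<gamma>" "\<gamma> * \<rho> < 1"
    and p1: "p1 \<in> proxset \<gamma> g z" and p2: "p2 \<in> proxset \<gamma> g z"
  shows "p1 = p2"
proof -
  define q where "q w = (norm (w - z))\<^sup>2 / (2 * \<gamma>)" for w
  have min1: "\<And>w. g p1 + ereal (q p1) \<le> g w + ereal (q w)" using p1 unfolding proxset_def q_def by blast
  have min2: "\<And>w. g p2 + ereal (q p2) \<le> g w + ereal (q w)" using p2 unfolding proxset_def q_def by blast
  obtain w0 where w0: "g w0 < \<infinity>" using proper unfolding proper_fun_def by blast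
  have ninf: "\<And>x. g x \<noteq> -\<infinity>" using proper unfolding proper_fun_def by blast
  have "g p1 \<noteq> \<infinity>" using min1[of w0] w0 by auto
  then obtain a1 where a1: "g p1 = ereal a1" using ninf[of p1] by (cases "g p1") auto
  have "g p2 \<noteq> \<infinity>" using min2[of w0] w0 by auto
  then obtain a2 where a2: "g p2 = ereal a2" using ninf[of p2] by (cases "g p2") auto
  have V1: "a1 + q p1 \<le> a2 + q p2" using min1[of p2] a1 a2 by simp
  have V2: "a2 + q p2 \<le> a1 + q p1" using min2[of p1] a1 a2 by simp
  define E where "E = {(x, r::real). g x + ereal (\<rho> / 2 * (norm x)\<^sup>2) \<le> ereal r}"
  have cE: "convex E" using wc unfolding weakly_convex_def ereal_convex_def E_def by simp
  define r1 where "r1 = a1 + \<rho> / 2 * (norm p1)\<^sup>2"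
  define r2 where "r2 = a2 + \<rho> / 2 * (norm p2)\<^sup>2"
  have e1: "(p1, r1) \<in> E" using a1 by (simp add: E_def r1_def)
  have e2: "(p2, r2) \<in> E" using a2 by (simp add: E_def r2_def)
  define mid where "mid = (1/2) *\<^sub>R p1 + (1/2) *\<^sub>R p2"
  have "(1/2::real) *\<^sub>R (p1, r1) + (1/2::real) *\<^sub>R (p2, r2) \<in> E"
    by (rule convexD[OF cE e1 e2]) auto
  then have "g mid + ereal (\<rho> / 2 * (norm mid)\<^sup>2) \<le> ereal (r1 / 2 + r2 / 2)"
    by (simp add: E_def mid_def)
  moreover have "g mid \<noteq> \<infinity>" using calculation by auto
  ultimately obtain am where am: "g mid = ereal am" "am + \<rho> / 2 * (norm mid)\<^sup>2 \<le> r1 / 2 + r2 / 2"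
    using ninf[of mid] by (cases "g mid") auto
  have V3: "a1 + q p1 \<le> am + q mid" using min1[of mid] a1 am by simp
  define D where "D = (norm (p1 - p2))\<^sup>2"
  have pm: "(norm mid)\<^sup>2 = (norm p1)\<^sup>2 / 2 + (norm p2)\<^sup>2 / 2 - D / 4"
    unfolding mid_def D_def by (rule par_mid)
  have "mid - z = (1/2) *\<^sub>R (p1 - z) + (1/2) *\<^sub>R (p2 - z)" by (simp add: mid_def vec_eq_iff field_simps)
  then have pz: "(norm (mid - z))\<^sup>2 = (norm (p1 - z))\<^sup>2 / 2 + (norm (p2 - z))\<^sup>2 / 2 - D / 4"
    using par_mid[of "p1 - z" "p2 - z"] by (simp add: D_def)
  have qm: "q mid = q p1 / 2 + q p2 / 2 - D / (8 * \<gamma>)"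
    using \<gamma> by (simp add: q_def pz field_simps)
  have amb: "am \<le> a1 / 2 + a2 / 2 + \<rho> * D / 8"
    using am(2) unfolding pm r1_def r2_def by (simp add: field_simps)
  have "D / (8 * \<gamma>) - \<rho> * D / 8 \<le> 0" using V1 V2 V3 amb qm by linarith
  then have "D * (1 - \<gamma> * \<rho>) / (8 * \<gamma>) \<le> 0" using \<gamma> by (simp add: field_simps)
  then have "D * (1 - \<gamma> * \<rho>) \<le> 0" using \<gamma> by (simp add: divide_le_0_iff)
  then have "D \<le> 0" using \<gamma> by (simp add: mult_le_0_iff)
  then have "D = 0" unfolding D_def by (simp add: antisym)
  then show ?thesis by (simp add: D_def)
qed

lemma sq_bound: "(x::real) \<ge> 0 \<Longrightarrow> x\<^sup>2 \<le> K \<Longrightarrow> x \<le> max 1 K"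
  by (cases "x \<le> 1") (auto simp: power2_eq_square intro: order_trans[of x "x*x"])

lemma prox_exists:
  fixes g :: "real^'n \<Rightarrow> ereal"
  assumes proper: "proper_fun g" and lsc: "lsc_fun g" and pb: "prox_bounded \<gamma>g g"
    and \<gamma>: "0 < \<gamma>" "2 * \<gamma> < \<gamma>g"
  shows "\<exists>p. p \<in> proxset \<gamma> g z"
proof -
  obtain c where c: "\<And>w. ereal c \<le> g w + ereal ((norm w)\<^sup>2 / (2 * (2 * \<gamma>)))"
    using pb \<gamma> unfolding prox_bounded_def by (metis mult_pos_pos zero_less_numeral)
  define q where "q w = (norm (w - z))\<^sup>2 / (2 * \<gamma>)" for w
  define G where "G w = g w + ereal (q w)" for w
  define L where "L = c - (norm z)\<^sup>2 / \<gamma>"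
  have ninf: "\<And>x. g x \<noteq> -\<infinity>" using proper unfolding proper_fun_def by blast
  have qc: "isCont q w" for w unfolding q_def using \<gamma> by (intro continuous_intros) auto
  have low: "ereal (L + (norm w)\<^sup>2 / (12 * \<gamma>)) \<le> G w" for w
  proof (cases "g w")
    case (real r)
    have cr: "c \<le> r + (norm w)\<^sup>2 / (4 * \<gamma>)" using c[of w] real by simp
    have y: "(norm w)\<^sup>2 \<le> 3/2 * (norm (w - z))\<^sup>2 + 3 * (norm z)\<^sup>2" by (rule norm_young)
    have "(norm (w - z))\<^sup>2 / (2 * \<gamma>) - (norm w)\<^sup>2 / (4 * \<gamma>) - ((norm w)\<^sup>2 / (12 * \<gamma>) - (norm z)\<^sup>2 / \<gamma>)
        = (6 * (norm (w - z))\<^sup>2 - 4 * (norm w)\<^sup>2 + 12 * (norm z)\<^sup>2) / (12 * \<gamma>)"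
      using \<gamma> by (simp add: field_simps)
    also have "\<dots> \<ge> 0" using y \<gamma> by (intro divide_nonneg_pos) auto
    finally show ?thesis using cr real by (simp add: G_def q_def L_def)
  qed (use ninf in \<open>auto simp: G_def\<close>)
  obtain w0 where w0: "g w0 < \<infinity>" using proper unfolding proper_fun_def by blast
  define m where "m = (INF w. G w)"
  have mup: "m < \<infinity>"
  proof -
    have "m \<le> G w0" unfolding m_def by (rule INF_lower) simp
    moreover have "G w0 < \<infinity>" using w0 by (cases "g w0") (auto simp: G_def)
    ultimately show ?thesis by (rule le_less_trans)
  qed
  have mlow: "ereal L \<le> m" unfolding m_def
  proof (rule INF_greatest)
    fix w show "ereal L \<le> G w" using low[of w] by (rule order_trans[rotated]) (use \<gamma> in simp)
  qed
  obtain mr where mr: "m = ereal mr" using mup mlow by (cases m) auto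
  have "\<exists>w. G w < ereal (mr + 1 / (Suc n))" for n :: nat
  proof -
    have "m < ereal (mr + 1 / (Suc n))" using mr by simp
    then show ?thesis unfolding m_def by (simp add: INF_less_iff)
  qed
  then obtain X where X: "\<And>n. G (X n) < ereal (mr + 1 / (Suc n))" by metis
  have bX: "norm (X n) \<le> max 1 (12 * \<gamma> * (mr + 1 - L))" for n
  proof (rule sq_bound)
    have "ereal (L + (norm (X n))\<^sup>2 / (12 * \<gamma>)) < ereal (mr + 1 / (Suc n))"
      using low[of "X n"] X[of n] by (rule le_less_trans)
    then have "L + (norm (X n))\<^sup>2 / (12 * \<gamma>) \<le> mr + 1"
      by (simp add: order_trans[of _ "mr + 1 / (Suc n)"] field_simps)
    then show "(norm (X n))\<^sup>2 \<le> 12 * \<gamma> * (mr + 1 - L)" using \<gamma> by (simp add: field_simps)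
  qed simp
  have "bounded (range X)" unfolding bounded_iff using bX by blast
  then obtain l r where r: "strict_mono r" and lim: "(X \<circ> r) \<longlonglongrightarrow> l"
    using bounded_imp_convergent_subsequence by blast
  have Gl: "G l \<le> ereal (mr + 1 / Suc k)" for k
  proof -
    have "eventually (\<lambda>n. g ((X \<circ> r) n) + ereal (q ((X \<circ> r) n)) \<le> ereal (mr + 1 / Suc k)) sequentially"
      unfolding eventually_sequentially
    proof (intro exI allI impI)
      fix n assume "k \<le> n"
      then have "k \<le> r n" using seq_suble[OF r, of n] by simp
      then have "1 / real (Suc (r n)) \<le> 1 / Suc k" by (simp add: frac_le)
      then have "ereal (mr + 1 / Suc (r n)) \<le> ereal (mr + 1 / Suc k)" by simp
      then show "g ((X \<circ> r) n) + ereal (q ((X \<circ> r) n)) \<le> ereal (mr + 1 / Suc k)"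
        using X[of "r n"] unfolding G_def by (metis comp_apply less_imp_le order_trans)
    qed
    then show ?thesis unfolding G_def by (rule G_lim[OF lsc qc lim])
  qed
  have "G l \<noteq> \<infinity>" using Gl[of 0] by auto
  moreover have "G l \<noteq> -\<infinity>" using ninf[of l] by (simp add: G_def)
  ultimately obtain gl where gl: "G l = ereal gl" by (cases "G l") auto
  have "gl \<le> mr"
  proof (rule ccontr)
    assume "\<not> gl \<le> mr"
    then obtain k where "inverse (real (Suc k)) < gl - mr" using reals_Archimedean by (metis diff_gt_0_iff_gt not_le)
    with Gl[of k] gl show False by (simp add: inverse_eq_divide)
  qed
  then have "G l \<le> G w" for w
  proof -
    assume "gl \<le> mr"
    then have "G l \<le> m" using gl mr by simp
    also have "m \<le> G w" unfolding m_def by (rule INF_lower) simp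
    finally show ?thesis .
  qed
  then have "l \<in> proxset \<gamma> g z" unfolding proxset_def G_def q_def by blast
  then show ?thesis by blast
qed



lemma sq_expand: "(norm (a - b))\<^sup>2 = (norm a)\<^sup>2 - 2 * (a \<bullet> b) + (norm (b::real^'n))\<^sup>2"
  unfolding power2_norm_eq_inner by (simp add: inner_simps inner_commute)

lemma moreau_deriv:
  fixes p :: "real^'n \<Rightarrow> real^'n" and a e :: "real^'n \<Rightarrow> real"
  assumes \<gamma>: "0 < \<gamma>"
    and e_def: "\<And>u. e u = a u + (norm (p u - u))\<^sup>2 / (2 * \<gamma>)"
    and e_min: "\<And>u v. e v \<le> a u + (norm (p u - v))\<^sup>2 / (2 * \<gamma>)"
    and pc: "isCont p z"
  shows "(e has_derivative (\<lambda>h. ((1 / \<gamma>) *\<^sub>R (z - p z)) \<bullet> h)) (at z)"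
  unfolding has_derivative_at_alt
proof (intro conjI allI impI)
  show "bounded_linear (\<lambda>h. ((1 / \<gamma>) *\<^sub>R (z - p z)) \<bullet> h)" by (rule bounded_linear_inner_right)
next
  fix \<epsilon> :: real assume e0: "0 < \<epsilon>"
  obtain \<delta>1 where d1: "\<delta>1 > 0" "\<And>y. dist y z < \<delta>1 \<Longrightarrow> dist (p y) (p z) < \<epsilon> * \<gamma> / 2"
    using pc e0 \<gamma> unfolding continuous_at_eps_delta by (metis half_gt_zero mult_pos_pos)
  show "\<exists>\<delta>>0. \<forall>y. norm (y - z) < \<delta> \<longrightarrow>
          norm (e y - e z - ((1 / \<gamma>) *\<^sub>R (z - p z)) \<bullet> (y - z)) \<le> \<epsilon> * norm (y - z)"
  proof (intro exI conjI allI impI)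
    show "0 < min \<delta>1 (\<epsilon> * \<gamma>)" using d1 e0 \<gamma> by simp
    fix y assume y: "norm (y - z) < min \<delta>1 (\<epsilon> * \<gamma>)"
    define d where "d = y - z"
    have yd: "y = z + d" by (simp add: d_def)
    have pp: "norm (p y - p z) \<le> \<epsilon> * \<gamma> / 2" using d1(2)[of y] y by (simp add: dist_norm)
    have dn: "norm d \<le> \<epsilon> * \<gamma>" using y by (simp add: d_def)
    define E where "E = e y - e z - ((1 / \<gamma>) *\<^sub>R (z - p z)) \<bullet> d"
    have i1: "((1 / \<gamma>) *\<^sub>R (z - p z)) \<bullet> d = - (((p z - z) \<bullet> d) / \<gamma>)"
      by (simp add: inner_diff_left) (metis minus_diff_eq minus_divide_left)
    have up1: "e y - e z \<le> ((norm (p z - y))\<^sup>2 - (norm (p z - z))\<^sup>2) / (2 * \<gamma>)"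
      using e_min[where u=z and v=y] e_def[of z] by (simp add: diff_divide_distrib)
    have "p z - y = (p z - z) - d" by (simp add: yd)
    then have "(norm (p z - y))\<^sup>2 = (norm (p z - z))\<^sup>2 - 2 * ((p z - z) \<bullet> d) + (norm d)\<^sup>2"
      using sq_expand by metis
    then have "((norm (p z - y))\<^sup>2 - (norm (p z - z))\<^sup>2) / (2 * \<gamma>) = ((norm d)\<^sup>2 - 2 * ((p z - z) \<bullet> d)) / (2 * \<gamma>)"
      by simp
    also have "\<dots> = (norm d)\<^sup>2 / (2 * \<gamma>) - ((p z - z) \<bullet> d) / \<gamma>"
      by (simp add: diff_divide_distrib)
    finally have up: "E \<le> (norm d)\<^sup>2 / (2 * \<gamma>)"
      using up1 i1 unfolding E_def by linarith
    have lo1: "e y - e z \<ge> ((norm (p y - y))\<^sup>2 - (norm (p y - z))\<^sup>2) / (2 * \<gamma>)"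
      using e_min[where u=y and v=z] e_def[of y] by (simp add: diff_divide_distrib)
    have "p y - z = (p y - y) - (- d)" by (simp add: yd)
    then have "(norm (p y - z))\<^sup>2 = (norm (p y - y))\<^sup>2 - 2 * ((p y - y) \<bullet> (- d)) + (norm (- d))\<^sup>2"
      using sq_expand[of "p y - y" "-d"] by metis
    then have "(norm (p y - z))\<^sup>2 = (norm (p y - y))\<^sup>2 + 2 * ((p y - y) \<bullet> d) + (norm d)\<^sup>2"
      by simp
    then have "((norm (p y - y))\<^sup>2 - (norm (p y - z))\<^sup>2) / (2 * \<gamma>) = - (2 * ((p y - y) \<bullet> d) + (norm d)\<^sup>2) / (2 * \<gamma>)"
      by simp
    also have "\<dots> = - (((p y - y) \<bullet> d) / \<gamma>) - (norm d)\<^sup>2 / (2 * \<gamma>)"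
      using \<gamma> by (simp add: field_simps)
    finally have lo2: "E \<ge> - (((p y - y) \<bullet> d) / \<gamma>) - (norm d)\<^sup>2 / (2 * \<gamma>) + ((p z - z) \<bullet> d) / \<gamma>"
      using lo1 i1 unfolding E_def by linarith
    have "(p y - y) \<bullet> d = (p y - p z) \<bullet> d + (p z - z) \<bullet> d - (norm d)\<^sup>2"
      by (simp add: yd inner_simps power2_norm_eq_inner)
    then have "- (((p y - y) \<bullet> d) / \<gamma>) + ((p z - z) \<bullet> d) / \<gamma> = (norm d)\<^sup>2 / \<gamma> - ((p y - p z) \<bullet> d) / \<gamma>"
      by (simp add: diff_divide_distrib add_divide_distrib)
    moreover have "(norm d)\<^sup>2 / \<gamma> - (norm d)\<^sup>2 / (2 * \<gamma>) = (norm d)\<^sup>2 / (2 * \<gamma>)" by simp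
    ultimately have lo3: "E \<ge> (norm d)\<^sup>2 / (2 * \<gamma>) - ((p y - p z) \<bullet> d) / \<gamma>"
      using lo2 by linarith
    have cs: "(p y - p z) \<bullet> d \<le> norm (p y - p z) * norm d" by (rule norm_cauchy_schwarz)
    have "((p y - p z) \<bullet> d) / \<gamma> \<le> (\<epsilon> * \<gamma> / 2) * norm d / \<gamma>"
      using cs pp \<gamma> by (intro divide_right_mono order_trans[OF cs] mult_right_mono) auto
    also have "\<dots> = \<epsilon> / 2 * norm d" using \<gamma> by simp
    finally have lo3': "((p y - p z) \<bullet> d) / \<gamma> \<le> \<epsilon> / 2 * norm d" .
    have "0 \<le> (norm d)\<^sup>2 / (2 * \<gamma>)" using \<gamma> by simp
    then have lo: "E \<ge> - (\<epsilon> / 2 * norm d)" using lo3 lo3' by linarith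
    have "(norm d)\<^sup>2 / (2 * \<gamma>) = norm d * (norm d / (2 * \<gamma>))" by (simp add: power2_eq_square)
    also have "\<dots> \<le> norm d * (\<epsilon> / 2)"
      using dn \<gamma> by (intro mult_left_mono) (auto simp: field_simps)
    finally have u2: "E \<le> norm d * (\<epsilon> / 2)" using up by linarith
    have n0: "0 \<le> \<epsilon> * norm d" using e0 by simp
    have "norm d * (\<epsilon> / 2) = (\<epsilon> * norm d) / 2" "\<epsilon> / 2 * norm d = (\<epsilon> * norm d) / 2" by simp_all
    then have "\<bar>E\<bar> \<le> \<epsilon> * norm d" using lo u2 n0 by linarith
    then show "norm (e y - e z - ((1 / \<gamma>) *\<^sub>R (z - p z)) \<bullet> (y - z)) \<le> \<epsilon> * norm (y - z)"
      by (simp add: E_def d_def)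
  qed
qed



lemma clarke_C1:
  fixes F :: "real^'n \<Rightarrow> real^'m"
  assumes V: "open V" "x \<in> V" and d: "\<forall>y\<in>V. F differentiable at y"
    and c: "continuous_on V (\<lambda>y. jacobian F (at y))"
  shows "clarke_jac F x = {jacobian F (at x)}"
proof -
  have "{A. \<exists>xs. xs \<longlonglongrightarrow> x \<and> (\<forall>k. F differentiable at (xs k)) \<and>
              (\<lambda>k. jacobian F (at (xs k))) \<longlonglongrightarrow> A} = {jacobian F (at x)}"
  proof (intro equalityI subsetI)
    fix A assume "A \<in> {A. \<exists>xs. xs \<longlonglongrightarrow> x \<and> (\<forall>k. F differentiable at (xs k)) \<and>
              (\<lambda>k. jacobian F (at (xs k))) \<longlonglongrightarrow> A}"
    then obtain X where X: "X \<longlonglongrightarrow> x" "(\<lambda>k. jacobian F (at (X k))) \<longlonglongrightarrow> A" by blast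
    have "isCont (\<lambda>y. jacobian F (at y)) x" using c V continuous_on_eq_continuous_at by blast
    then have "(\<lambda>k. jacobian F (at (X k))) \<longlonglongrightarrow> jacobian F (at x)"
      using X(1) by (rule isCont_tendsto_compose)
    then have "A = jacobian F (at x)" using X(2) LIMSEQ_unique by blast
    then show "A \<in> {jacobian F (at x)}" by simp
  next
    fix A assume "A \<in> {jacobian F (at x)}"
    then show "A \<in> {A. \<exists>xs. xs \<longlonglongrightarrow> x \<and> (\<forall>k. F differentiable at (xs k)) \<and>
              (\<lambda>k. jacobian F (at (xs k))) \<longlonglongrightarrow> A}"
      using d V by (intro CollectI exI[of _ "\<lambda>k. x"]) auto
  qed
  then show ?thesis unfolding clarke_jac_def by simp
qed

lemma fbe_ident:
  fixes G x u :: "real^'n"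
  assumes \<gamma>: "0 < \<gamma>"
  shows "fx + G \<bullet> (u - x) + (norm (u - x))\<^sup>2 / (2 * \<gamma>)
       = fx - \<gamma> / 2 * (G \<bullet> G) + (norm (u - (x - \<gamma> *\<^sub>R G)))\<^sup>2 / (2 * \<gamma>)"
proof -
  have "u - (x - \<gamma> *\<^sub>R G) = (u - x) + \<gamma> *\<^sub>R G" by simp
  then have "(norm (u - (x - \<gamma> *\<^sub>R G)))\<^sup>2 = (norm (u - x))\<^sup>2 + 2 * \<gamma> * (G \<bullet> (u - x)) + \<gamma>\<^sup>2 * (G \<bullet> G)"
    unfolding power2_norm_eq_inner by (simp add: inner_simps inner_commute power2_eq_square algebra_simps)
  then show ?thesis using \<gamma> by (simp add: field_simps power2_eq_square)
qed

lemma fbe_eq: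
  fixes f :: "real^'n \<Rightarrow> real" and g :: "real^'n \<Rightarrow> ereal"
  assumes \<gamma>: "0 < \<gamma>" and pmin: "p \<in> proxset \<gamma> g (x - \<gamma> *\<^sub>R grad f x)" and gp: "g p = ereal a"
  shows "fbe \<gamma> f g x = ereal (f x - \<gamma> / 2 * (grad f x \<bullet> grad f x)
            + (a + (norm (p - (x - \<gamma> *\<^sub>R grad f x)))\<^sup>2 / (2 * \<gamma>)))"
proof -
  define z where "z = x - \<gamma> *\<^sub>R grad f x"
  define c where "c = f x - \<gamma> / 2 * (grad f x \<bullet> grad f x)"
  define q where "q u = (norm (u - z))\<^sup>2 / (2 * \<gamma>)" for u
  define T where "T u = ereal (f x + grad f x \<bullet> (u - x) + (norm (u - x))\<^sup>2 / (2 * \<gamma>)) + g u" for u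
  have Tq: "T u = ereal (c + q u) + g u" for u
    unfolding T_def c_def q_def z_def using fbe_ident[OF \<gamma>] by metis
  have min: "g p + ereal (q p) \<le> g u + ereal (q u)" for u
    using pmin unfolding proxset_def q_def z_def by blast
  have le: "T p \<le> T u" for u
  proof (cases "g u")
    case (real b)
    then show ?thesis using min[of u] gp unfolding Tq by simp
  next
    case PInf
    then show ?thesis unfolding Tq by simp
  next
    case MInf
    then show ?thesis using min[of u] gp by simp
  qed
  have "fbe \<gamma> f g x = (INF u. T u)" unfolding fbe_def T_def by simp
  also have "\<dots> = T p"
    by (rule antisym[OF INF_lower[OF UNIV_I] INF_greatest]) (use le in blast)
  also have "\<dots> = ereal (c + (a + q p))" unfolding Tq gp by (simp add: add.commute add.left_commute)
  finally show ?thesis by (simp add: c_def q_def z_def)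
qed

lemma Qv: "(mat 1 - \<gamma> *\<^sub>R (H::real^'n^'n)) *v h = h - \<gamma> *\<^sub>R (H *v h)"
  by (simp add: matrix_vector_mult_diff_rdistrib scaleR_matrix_vector_assoc)

lemma phi_deriv:
  fixes f e :: "real^'n \<Rightarrow> real" and p :: "real^'n \<Rightarrow> real^'n"
  assumes \<gamma>: "0 < \<gamma>"
    and fd: "(f has_derivative (\<lambda>h. grad f x \<bullet> h)) (at x)"
    and gd: "(grad f has_derivative (\<lambda>h. hess f x *v h)) (at x)"
    and ed: "(e has_derivative (\<lambda>k. ((1 / \<gamma>) *\<^sub>R ((x - \<gamma> *\<^sub>R grad f x) - p (x - \<gamma> *\<^sub>R grad f x))) \<bullet> k))
               (at (x - \<gamma> *\<^sub>R grad f x))"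
  shows "((\<lambda>y. f y - \<gamma> / 2 * (grad f y \<bullet> grad f y) + e (y - \<gamma> *\<^sub>R grad f y)) has_derivative
           (\<lambda>h. ((1 / \<gamma>) *\<^sub>R (x - p (x - \<gamma> *\<^sub>R grad f x))) \<bullet> ((mat 1 - \<gamma> *\<^sub>R hess f x) *v h))) (at x)"
proof -
  define G where "G = grad f x"
  define H where "H = hess f x"
  define zz where "zz = x - \<gamma> *\<^sub>R grad f x"
  define P where "P = p zz"
  have d2: "((\<lambda>y. grad f y \<bullet> grad f y) has_derivative (\<lambda>h. grad f x \<bullet> (hess f x *v h) + (hess f x *v h) \<bullet> grad f x)) (at x)"
    by (rule has_derivative_inner[OF gd gd])
  have d2': "((\<lambda>y. \<gamma> / 2 * (grad f y \<bullet> grad f y)) has_derivative (\<lambda>h. \<gamma> / 2 * (grad f x \<bullet> (hess f x *v h) + (hess f x *v h) \<bullet> grad f x))) (at x)"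
    by (rule has_derivative_mult_right[OF d2])
  have dz: "((\<lambda>y. y - \<gamma> *\<^sub>R grad f y) has_derivative (\<lambda>h. h - \<gamma> *\<^sub>R (hess f x *v h))) (at x)"
    by (intro has_derivative_diff has_derivative_ident has_derivative_scaleR_right gd)
  have de: "((\<lambda>y. e (y - \<gamma> *\<^sub>R grad f y)) has_derivative
      (\<lambda>h. ((1 / \<gamma>) *\<^sub>R ((x - \<gamma> *\<^sub>R grad f x) - p (x - \<gamma> *\<^sub>R grad f x))) \<bullet> (h - \<gamma> *\<^sub>R (hess f x *v h)))) (at x)"
    by (rule has_derivative_compose[OF dz ed])
  have all: "((\<lambda>y. f y - \<gamma> / 2 * (grad f y \<bullet> grad f y) + e (y - \<gamma> *\<^sub>R grad f y)) has_derivative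
     (\<lambda>h. grad f x \<bullet> h - \<gamma> / 2 * (grad f x \<bullet> (hess f x *v h) + (hess f x *v h) \<bullet> grad f x)
        + ((1 / \<gamma>) *\<^sub>R ((x - \<gamma> *\<^sub>R grad f x) - p (x - \<gamma> *\<^sub>R grad f x))) \<bullet> (h - \<gamma> *\<^sub>R (hess f x *v h)))) (at x)"
    by (rule has_derivative_add[OF has_derivative_diff[OF fd d2'] de])
  show ?thesis
  proof (rule has_derivative_eq_rhs[OF all], rule ext)
    fix h
    define w where "w = h - \<gamma> *\<^sub>R (H *v h)"
    have s1: "(1 / \<gamma>) *\<^sub>R (zz - P) = (1 / \<gamma>) *\<^sub>R (x - P) - G"
      using \<gamma> by (simp add: zz_def G_def algebra_simps)
    have s2: "G \<bullet> h - \<gamma> / 2 * (G \<bullet> (H *v h) + (H *v h) \<bullet> G) = G \<bullet> w"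
      by (simp add: w_def inner_commute inner_diff_right)
    have "G \<bullet> h - \<gamma> / 2 * (G \<bullet> (H *v h) + (H *v h) \<bullet> G) + ((1 / \<gamma>) *\<^sub>R (zz - P)) \<bullet> w
        = ((1 / \<gamma>) *\<^sub>R (x - P)) \<bullet> w"
      unfolding s1 s2 by (simp add: inner_diff_left)
    then show "grad f x \<bullet> h - \<gamma> / 2 * (grad f x \<bullet> (hess f x *v h) + (hess f x *v h) \<bullet> grad f x)
        + ((1 / \<gamma>) *\<^sub>R ((x - \<gamma> *\<^sub>R grad f x) - p (x - \<gamma> *\<^sub>R grad f x))) \<bullet> (h - \<gamma> *\<^sub>R (hess f x *v h))
        = ((1 / \<gamma>) *\<^sub>R (x - p (x - \<gamma> *\<^sub>R grad f x))) \<bullet> ((mat 1 - \<gamma> *\<^sub>R hess f x) *v h)"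
      by (simp add: Qv w_def G_def H_def zz_def P_def)
  qed
qed

lemma grad_of:
  fixes \<phi> :: "real^'n \<Rightarrow> real"
  assumes d: "(\<phi> has_derivative (\<lambda>h. R \<bullet> (Q *v h))) (at y)" and sym: "\<And>i j. Q $ i $ j = Q $ j $ i"
  shows "grad \<phi> y = Q *v R"
proof -
  have fd: "frechet_derivative \<phi> (at y) = (\<lambda>h. R \<bullet> (Q *v h))" using d frechet_derivative_at by metis
  show ?thesis
    unfolding grad_def fd
    apply (simp add: vec_eq_iff inner_vec_def mv_axis)
    apply (simp add: matrix_vector_mult_def sym mult.commute)
    done
qed

lemma Qm_sym:
  assumes "\<And>i j. hess f x $ i $ j = hess f x $ j $ i"
  shows "Qm \<gamma> f x $ i $ j = Qm \<gamma> f x $ j $ i"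
  using assms by (simp add: Qm_def mat_def)

lemma third_eq:
  fixes f :: "real^'n \<Rightarrow> real"
  assumes "hess f differentiable at x"
  shows "third f x i j k = frechet_derivative (hess f) (at x) (axis k 1) $ i $ j"
proof -
  have "(hess f has_derivative frechet_derivative (hess f) (at x)) (at x)"
    using assms frechet_derivative_works by blast
  then have "((\<lambda>y. hess f y $ i) has_derivative (\<lambda>h. frechet_derivative (hess f) (at x) h $ i)) (at x)"
    by (rule bounded_linear.has_derivative[OF bounded_linear_vec_nth])
  then have "frechet_derivative (\<lambda>y. hess f y $ i) (at x) = (\<lambda>h. frechet_derivative (hess f) (at x) h $ i)"
    using frechet_derivative_at by metis
  then show ?thesis unfolding third_def jacobian_def by (simp add: matrix_def)
qed

lemma lin_expand:
  fixes D :: "real^'n \<Rightarrow> 'b::real_vector"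
  assumes lin: "linear D"
  shows "D h = (\<Sum>k\<in>UNIV. h $ k *\<^sub>R D (axis k 1))"
proof -
  have "h = (\<Sum>i\<in>UNIV. h $ i *\<^sub>R axis i 1)"
    by (metis (no_types) basis_expansion scalar_mult_eq_scaleR)
  then have "D h = D (\<Sum>i\<in>UNIV. h $ i *\<^sub>R axis i 1)" by simp
  also have "\<dots> = (\<Sum>i\<in>UNIV. D (h $ i *\<^sub>R axis i 1))" by (rule linear_sum[OF lin])
  also have "\<dots> = (\<Sum>i\<in>UNIV. h $ i *\<^sub>R D (axis i 1))" by (simp add: linear_scale[OF lin])
  finally show ?thesis .
qed

lemma Mm_eq:
  fixes Dh :: "real^'n \<Rightarrow> real^'n^'n"
  assumes lin: "linear Dh" and th: "\<And>i j k. T i j k = Dh (axis k 1) $ i $ j"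
  shows "((- \<gamma>) *\<^sub>R Dh h) *v R = (\<chi> i k. - \<gamma> * (\<Sum>j\<in>UNIV. T i j k * R $ j)) *v h"
proof -
  have comp: "Dh h $ i $ j = (\<Sum>k\<in>UNIV. h $ k * T i j k)" for i j
    using lin_expand[OF lin, of h] by (simp add: th sum_component)
  have "(((- \<gamma>) *\<^sub>R Dh h) *v R) $ i = ((\<chi> i k. - \<gamma> * (\<Sum>j\<in>UNIV. T i j k * R $ j)) *v h) $ i" for i
  proof -
    have "(((- \<gamma>) *\<^sub>R Dh h) *v R) $ i = (\<Sum>j\<in>UNIV. (- \<gamma> * (\<Sum>k\<in>UNIV. h $ k * T i j k)) * R $ j)"
      by (simp add: matrix_vector_mult_def comp)
    also have "\<dots> = (\<Sum>j\<in>UNIV. \<Sum>k\<in>UNIV. - \<gamma> * (h $ k * T i j k) * R $ j)"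
      by (simp add: sum_distrib_left sum_distrib_right)
    also have "\<dots> = (\<Sum>k\<in>UNIV. \<Sum>j\<in>UNIV. - \<gamma> * (h $ k * T i j k) * R $ j)"
      by (rule sum.swap)
    also have "\<dots> = (\<Sum>k\<in>UNIV. (- \<gamma> * (\<Sum>j\<in>UNIV. T i j k * R $ j)) * h $ k)"
    proof (rule sum.cong[OF refl])
      fix k
      have "(- \<gamma> * (\<Sum>j\<in>UNIV. T i j k * R $ j)) * h $ k = (\<Sum>j\<in>UNIV. (- \<gamma> * (T i j k * R $ j)) * h $ k)"
        by (simp add: sum_distrib_left sum_distrib_right)
      also have "\<dots> = (\<Sum>j\<in>UNIV. - \<gamma> * (h $ k * T i j k) * R $ j)"
        by (rule sum.cong[OF refl]) (simp only: mult.assoc mult.commute mult.left_commute)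
      finally show "(\<Sum>j\<in>UNIV. - \<gamma> * (h $ k * T i j k) * R $ j) = (- \<gamma> * (\<Sum>j\<in>UNIV. T i j k * R $ j)) * h $ k"
        by simp
    qed
    also have "\<dots> = ((\<chi> i k. - \<gamma> * (\<Sum>j\<in>UNIV. T i j k * R $ j)) *v h) $ i"
      by (simp add: matrix_vector_mult_def)
    finally show ?thesis .
  qed
  then show ?thesis by (simp add: vec_eq_iff)
qed

lemma B_eq:
  fixes Q P :: "real^'n^'n"
  shows "Q *v ((1 / \<gamma>) *\<^sub>R (h - P *v (Q *v h))) = ((1 / \<gamma>) *\<^sub>R (Q ** (mat 1 - P ** Q))) *v h"
proof -
  have "((1 / \<gamma>) *\<^sub>R (Q ** (mat 1 - P ** Q))) *v h = (1 / \<gamma>) *\<^sub>R ((Q ** (mat 1 - P ** Q)) *v h)"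
    by (simp add: scaleR_matrix_vector_assoc)
  also have "(Q ** (mat 1 - P ** Q)) *v h = Q *v (h - P *v (Q *v h))"
    by (simp add: matrix_vector_mul_assoc[symmetric] matrix_vector_mult_diff_rdistrib)
  finally show ?thesis by (simp add: matrix_vector_mult_scaleR)
qed

definition tri3 :: "('n::finite \<Rightarrow> 'n \<Rightarrow> 'n \<Rightarrow> real) \<Rightarrow> real^'n \<Rightarrow> real^'n \<Rightarrow> real^'n \<Rightarrow> real" where
  "tri3 T u v w = (\<Sum>i\<in>UNIV. \<Sum>j\<in>UNIV. \<Sum>k\<in>UNIV. T i j k * u $ i * v $ j * w $ k)"

lemma abs3_le: "\<bar>a\<bar> \<le> 1 \<Longrightarrow> \<bar>b\<bar> \<le> 1 \<Longrightarrow> \<bar>c\<bar> \<le> 1 \<Longrightarrow> \<bar>(t::real) * a * b * c\<bar> \<le> \<bar>t\<bar>"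
proof -
  assume a: "\<bar>a\<bar> \<le> 1" and b: "\<bar>b\<bar> \<le> 1" and c: "\<bar>c\<bar> \<le> 1"
  have "\<bar>a * b * c\<bar> \<le> 1" using a b c by (simp add: abs_mult mult_le_one)
  then have "\<bar>t\<bar> * \<bar>a * b * c\<bar> \<le> \<bar>t\<bar>" by (simp add: mult_left_le)
  then show ?thesis by (simp add: abs_mult mult.assoc)
qed

lemma tri_bound:
  fixes T :: "'n::finite \<Rightarrow> 'n \<Rightarrow> 'n \<Rightarrow> real"
  assumes "norm u \<le> 1" "norm v \<le> 1" "norm w \<le> 1"
  shows "\<bar>tri3 T u v w\<bar> \<le> tensor3_norm T"
proof -
  define A where "A = {(u::real^'n, v::real^'n, w::real^'n). norm u \<le> 1 \<and> norm v \<le> 1 \<and> norm w \<le> 1}"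
  define F where "F = (\<lambda>(u, v, w). \<bar>tri3 T u v w\<bar>)"
  have bnd: "F x \<le> (\<Sum>i\<in>UNIV. \<Sum>j\<in>UNIV. \<Sum>k\<in>UNIV. \<bar>T i j k\<bar>)" if xA: "x \<in> A" for x
  proof -
    obtain u v w where x: "x = (u, v, w)" and n: "norm u \<le> 1" "norm v \<le> 1" "norm w \<le> 1"
      using xA unfolding A_def by (cases x) auto
    have cu: "\<bar>u $ i\<bar> \<le> 1" "\<bar>v $ i\<bar> \<le> 1" "\<bar>w $ i\<bar> \<le> 1" for i
      using n component_le_norm_cart order_trans by metis+
    have "F x = \<bar>tri3 T u v w\<bar>" by (simp add: F_def x)
    also have "\<dots> \<le> (\<Sum>i\<in>UNIV. \<bar>\<Sum>j\<in>UNIV. \<Sum>k\<in>UNIV. T i j k * u $ i * v $ j * w $ k\<bar>)"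
      unfolding tri3_def by (rule sum_abs)
    also have "\<dots> \<le> (\<Sum>i\<in>UNIV. \<Sum>j\<in>UNIV. \<bar>\<Sum>k\<in>UNIV. T i j k * u $ i * v $ j * w $ k\<bar>)"
      by (intro sum_mono sum_abs)
    also have "\<dots> \<le> (\<Sum>i\<in>UNIV. \<Sum>j\<in>UNIV. \<Sum>k\<in>UNIV. \<bar>T i j k * u $ i * v $ j * w $ k\<bar>)"
      by (intro sum_mono sum_abs)
    also have "\<dots> \<le> (\<Sum>i\<in>UNIV. \<Sum>j\<in>UNIV. \<Sum>k\<in>UNIV. \<bar>T i j k\<bar>)"
      by (intro sum_mono abs3_le cu)
    finally show ?thesis .
  qed
  have "(u, v, w) \<in> A" using assms by (simp add: A_def)
  then have "F (u, v, w) \<le> (SUP x\<in>A. F x)"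
    by (rule cSUP_upper) (use bnd in \<open>intro bdd_aboveI2\<close>)
  then show ?thesis by (simp add: F_def A_def tensor3_norm_def tri3_def)
qed

lemma tri_hom: "tri3 T (a *\<^sub>R u) (b *\<^sub>R v) (c *\<^sub>R w) = a * b * c * tri3 T u v w"
  by (simp add: tri3_def sum_distrib_left mult.assoc mult.left_commute)

lemma tri_gen: fixes T :: "'n::finite \<Rightarrow> 'n \<Rightarrow> 'n \<Rightarrow> real" shows "\<bar>tri3 T u v w\<bar> \<le> tensor3_norm T * norm u * norm v * norm w"
proof (cases "u = 0 \<or> v = 0 \<or> w = 0")
  case True
  have "\<bar>tri3 T 0 0 0\<bar> \<le> tensor3_norm T" by (rule tri_bound) auto
  then have "0 \<le> tensor3_norm T" by (simp add: tri3_def)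
  moreover have "tri3 T u v w = 0" using True by (auto simp: tri3_def)
  ultimately show ?thesis by simp
next
  case False
  then have n: "norm u > 0" "norm v > 0" "norm w > 0" by auto
  have "\<bar>tri3 T ((1 / norm u) *\<^sub>R u) ((1 / norm v) *\<^sub>R v) ((1 / norm w) *\<^sub>R w)\<bar> \<le> tensor3_norm T"
    by (rule tri_bound) (use n in auto)
  then have "\<bar>tri3 T u v w\<bar> / (norm u * norm v * norm w) \<le> tensor3_norm T"
    unfolding tri_hom using n by (simp add: abs_mult)
  then show ?thesis using n by (simp add: divide_le_eq mult.assoc mult.commute mult.left_commute)
qed

lemma Mnorm_bound:
  fixes T :: "'n::finite \<Rightarrow> 'n \<Rightarrow> 'n \<Rightarrow> real" and R :: "real^'n"
  assumes \<gamma>: "0 \<le> \<gamma>"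
  shows "mat_norm (\<chi> i k. - \<gamma> * (\<Sum>j\<in>UNIV. T i j k * R $ j)) \<le> \<gamma> * tensor3_norm T * norm R"
  unfolding mat_norm_def
proof (rule onorm_le)
  fix v :: "real^'n"
  define M where "M = (\<chi> i k. - \<gamma> * (\<Sum>j\<in>UNIV. T i j k * R $ j))"
  have key: "(M *v v) \<bullet> (M *v v) = - \<gamma> * tri3 T (M *v v) R v"
  proof -
    define u where "u = M *v v"
    have "u \<bullet> (M *v v) = (\<Sum>i\<in>UNIV. \<Sum>k\<in>UNIV. u $ i * ((- \<gamma> * (\<Sum>j\<in>UNIV. T i j k * R $ j)) * v $ k))"
      by (simp add: M_def inner_vec_def matrix_vector_mult_def sum_distrib_left)
    also have "\<dots> = (\<Sum>i\<in>UNIV. \<Sum>k\<in>UNIV. \<Sum>j\<in>UNIV. - \<gamma> * (T i j k * u $ i * R $ j * v $ k))"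
    proof (intro sum.cong refl)
      fix i k
      have "u $ i * ((- \<gamma> * (\<Sum>j\<in>UNIV. T i j k * R $ j)) * v $ k) = (\<Sum>j\<in>UNIV. u $ i * ((- \<gamma> * (T i j k * R $ j)) * v $ k))"
        by (simp add: sum_distrib_left sum_distrib_right)
      also have "\<dots> = (\<Sum>j\<in>UNIV. - \<gamma> * (T i j k * u $ i * R $ j * v $ k))"
        by (rule sum.cong[OF refl]) (simp only: mult.assoc mult.commute mult.left_commute)
      finally show "u $ i * ((- \<gamma> * (\<Sum>j\<in>UNIV. T i j k * R $ j)) * v $ k) = (\<Sum>j\<in>UNIV. - \<gamma> * (T i j k * u $ i * R $ j * v $ k))" .
    qed
    also have "\<dots> = (\<Sum>i\<in>UNIV. \<Sum>j\<in>UNIV. \<Sum>k\<in>UNIV. - \<gamma> * (T i j k * u $ i * R $ j * v $ k))"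
      by (rule sum.cong[OF refl]) (rule sum.swap)
    also have "\<dots> = - \<gamma> * tri3 T u R v"
      by (simp add: tri3_def sum_distrib_left)
    finally show ?thesis by (simp add: u_def)
  qed
  have "(norm (M *v v))\<^sup>2 \<le> \<gamma> * (tensor3_norm T * norm (M *v v) * norm R * norm v)"
  proof -
    have "(norm (M *v v))\<^sup>2 = - \<gamma> * tri3 T (M *v v) R v" by (simp add: power2_norm_eq_inner key)
    also have "\<dots> \<le> \<gamma> * \<bar>tri3 T (M *v v) R v\<bar>"
      using mult_left_mono[OF abs_ge_minus_self[of "tri3 T (M *v v) R v"] \<gamma>] by simp
    also have "\<dots> \<le> \<gamma> * (tensor3_norm T * norm (M *v v) * norm R * norm v)"
      using \<gamma> tri_gen by (rule mult_left_mono[rotated])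
    finally show ?thesis .
  qed
  then have ineq: "norm (M *v v) * norm (M *v v) \<le> norm (M *v v) * (\<gamma> * tensor3_norm T * norm R * norm v)"
    by (simp add: power2_eq_square mult.assoc mult.left_commute mult.commute)
  have "norm (M *v v) \<le> \<gamma> * tensor3_norm T * norm R * norm v"
  proof (cases "norm (M *v v) = 0")
    case True
    have "\<bar>tri3 T 0 0 0\<bar> \<le> tensor3_norm T" by (rule tri_bound) auto
    then have "0 \<le> tensor3_norm T" by (simp add: tri3_def)
    then show ?thesis using True \<gamma> by simp
  next
    case False
    then have "norm (M *v v) > 0" by simp
    then show ?thesis using ineq by (simp add: mult_le_cancel_left)
  qed
  then show "norm (M *v v) \<le> \<gamma> * tensor3_norm T * norm R * norm v" .
qed



theorem corollary3p5:
  fixes f :: "real^'n \<Rightarrow> real" and g :: "real^'n \<Rightarrow> ereal"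
    and Lf \<rho> \<gamma>g :: real and xs :: "real^'n"
  assumes f_diff: "\<forall>x. f differentiable at x"
    and f_lip: "lipschitz_on Lf UNIV (grad f)"
    and g_proper: "proper_fun g"
    and g_lsc: "lsc_fun g"
    and g_pb: "prox_bounded \<gamma>g g"
    and g_wc: "weakly_convex \<rho> g"
    and argmin_ne: "\<exists>x. \<forall>y. ereal (f x) + g x \<le> ereal (f y) + g y"
    and crit: "critical \<gamma>g f g xs"
    and f_C3: "\<exists>S. xs \<in> S \<and> C3_on S f"
  shows "\<exists>\<gamma>0>0. \<forall>\<gamma>. 0 < \<gamma> \<and> \<gamma> < \<gamma>0 \<longrightarrow>
    (\<exists>V. (xs - \<gamma> *\<^sub>R grad f xs) \<in> V \<and> C1_on V (prox \<gamma> g)) \<longrightarrow>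
    (\<exists>U. open U \<and> xs \<in> U \<and>
      (\<forall>x\<in>U.
         gen_hess \<gamma> f g x =
           {(1 / \<gamma>) *\<^sub>R (Qm \<gamma> f x ** (mat 1 - Pm \<gamma> f g x ** Qm \<gamma> f x))} \<and>
         fbe_real \<gamma> f g differentiable at x \<and>
         grad (fbe_real \<gamma> f g) differentiable at x \<and>
         mat_norm (hess (fbe_real \<gamma> f g) x
                     - (1 / \<gamma>) *\<^sub>R (Qm \<gamma> f x ** (mat 1 - Pm \<gamma> f g x ** Qm \<gamma> f x)))
           = mat_norm (Mm \<gamma> f g x) \<and>
         mat_norm (Mm \<gamma> f g x)
           \<le> \<gamma> * tensor3_norm (third f x) * norm (Rfb \<gamma> f g x)))"
proof -
  obtain S where xsS: "xs \<in> S" and C3: "C3_on S f" using f_C3 by blast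
  have Sopen: "open S" and fdS: "\<forall>x\<in>S. f differentiable at x"
    and gdS: "\<forall>x\<in>S. grad f differentiable at x" and hdS: "\<forall>x\<in>S. hess f differentiable at x"
    using C3 unfolding C3_on_def by auto
  have \<gamma>g0: "0 < \<gamma>g" using g_pb unfolding prox_bounded_def by simp
  define \<gamma>0 where "\<gamma>0 = min (\<gamma>g / 2) (1 / (\<bar>\<rho>\<bar> + 1))"
  have \<gamma>00: "0 < \<gamma>0" using \<gamma>g0 by (simp add: \<gamma>0_def)
  show ?thesis
  proof (intro exI[of _ \<gamma>0] conjI allI impI)
    show "0 < \<gamma>0" by (rule \<gamma>00)
    fix \<gamma> assume \<gamma>: "0 < \<gamma> \<and> \<gamma> < \<gamma>0"
    assume "\<exists>V. (xs - \<gamma> *\<^sub>R grad f xs) \<in> V \<and> C1_on V (prox \<gamma> g)"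
    then obtain V where z0V: "xs - \<gamma> *\<^sub>R grad f xs \<in> V" and C1: "C1_on V (prox \<gamma> g)" by blast
    have Vopen: "open V" and pdV: "\<forall>z\<in>V. prox \<gamma> g differentiable at z"
      and pcV: "continuous_on V (\<lambda>z. jacobian (prox \<gamma> g) (at z))"
      using C1 unfolding C1_on_def by auto
    have gpos: "0 < \<gamma>" and g2: "2 * \<gamma> < \<gamma>g" using \<gamma> by (auto simp: \<gamma>0_def)
    have "\<gamma> * (\<bar>\<rho>\<bar> + 1) < 1" using \<gamma> by (simp add: \<gamma>0_def pos_less_divide_eq)
    moreover have "\<gamma> * \<rho> \<le> \<gamma> * (\<bar>\<rho>\<bar> + 1)" using gpos by (intro mult_left_mono) auto
    ultimately have grho: "\<gamma> * \<rho> < 1" by linarith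
    define p where "p = prox \<gamma> g"
    have pin: "p z \<in> proxset \<gamma> g z" for z
    proof -
      obtain q where q: "q \<in> proxset \<gamma> g z" using prox_exists[OF g_proper g_lsc g_pb gpos g2] by blast
      have "\<exists>!q. q \<in> proxset \<gamma> g z"
        using q prox_unique[OF g_proper g_wc gpos grho] by blast
      then show ?thesis unfolding p_def prox_def by (rule theI')
    qed
    have ninf: "\<And>x. g x \<noteq> -\<infinity>" using g_proper unfolding proper_fun_def by blast
    obtain w0 where w0: "g w0 < \<infinity>" using g_proper unfolding proper_fun_def by blast
    have pfin: "g (p z) \<noteq> \<infinity>" for z
    proof
      assume inf: "g (p z) = \<infinity>"
      have "g (p z) + ereal ((norm (p z - z))\<^sup>2 / (2 * \<gamma>)) \<le> g w0 + ereal ((norm (w0 - z))\<^sup>2 / (2 * \<gamma>))"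
        using pin[of z] unfolding proxset_def by blast
      then have "g w0 + ereal ((norm (w0 - z))\<^sup>2 / (2 * \<gamma>)) = \<infinity>" using inf by simp
      then show False using w0 by (cases "g w0") auto
    qed
    define a where "a z = real_of_ereal (g (p z))" for z
    have ga: "g (p z) = ereal (a z)" for z using pfin[of z] ninf[of "p z"] unfolding a_def by (cases "g (p z)") auto
    define e where "e z = a z + (norm (p z - z))\<^sup>2 / (2 * \<gamma>)" for z
    have e_min: "e v \<le> a u + (norm (p u - v))\<^sup>2 / (2 * \<gamma>)" for u v
    proof -
      have "g (p v) + ereal ((norm (p v - v))\<^sup>2 / (2 * \<gamma>)) \<le> g (p u) + ereal ((norm (p u - v))\<^sup>2 / (2 * \<gamma>))"
        using pin[of v] unfolding proxset_def by blast
      then show ?thesis unfolding e_def ga by simp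
    qed
    define zz where "zz y = y - \<gamma> *\<^sub>R grad f y" for y
    have fbe_r: "fbe_real \<gamma> f g y = f y - \<gamma> / 2 * (grad f y \<bullet> grad f y) + e (y - \<gamma> *\<^sub>R grad f y)" for y
      unfolding fbe_real_def fbe_eq[OF gpos pin ga] e_def by simp
    then have fbe_fun: "fbe_real \<gamma> f g = (\<lambda>y. f y - \<gamma> / 2 * (grad f y \<bullet> grad f y) + e (y - \<gamma> *\<^sub>R grad f y))"
      by (rule ext)
    have gcS: "continuous_on S (grad f)"
      using gdS by (intro continuous_at_imp_continuous_on) (auto intro: differentiable_imp_continuous_within)
    have zzc: "continuous_on S zz" unfolding zz_def by (intro continuous_intros gcS)
    define U where "U = S \<inter> zz -` V"
    have Uopen: "open U" unfolding U_def by (rule continuous_open_preimage[OF zzc Sopen Vopen])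
    have xsU: "xs \<in> U" using xsS z0V by (simp add: U_def zz_def)
    have hsym: "hess f y $ i $ j = hess f y $ j $ i" if "y \<in> S" for y i j
      using hess_sym[OF Sopen that fdS gdS] hdS that differentiable_imp_continuous_within by blast
    have dz: "((\<lambda>y. y - \<gamma> *\<^sub>R grad f y) has_derivative (\<lambda>h. Qm \<gamma> f y *v h)) (at y)" if "y \<in> S" for y
    proof -
      have "((\<lambda>y. y - \<gamma> *\<^sub>R grad f y) has_derivative (\<lambda>h. h - \<gamma> *\<^sub>R (hess f y *v h))) (at y)"
        using hess_hasderiv gdS that by (intro has_derivative_diff has_derivative_ident has_derivative_scaleR_right) auto
      then show ?thesis by (simp add: Qm_def Qv)
    qed
    have pd: "(p has_derivative (\<lambda>k. Pm \<gamma> f g y *v k)) (at (y - \<gamma> *\<^sub>R grad f y))" if "y \<in> U" for y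
      using that pdV jacobian_works unfolding U_def zz_def Pm_def p_def by auto
    have phid: "(fbe_real \<gamma> f g has_derivative (\<lambda>h. Rfb \<gamma> f g y \<bullet> (Qm \<gamma> f y *v h))) (at y)"
      if yU: "y \<in> U" for y
    proof -
      have yS: "y \<in> S" using yU by (simp add: U_def)
      have pc: "isCont p (y - \<gamma> *\<^sub>R grad f y)"
        using pd[OF yU] has_derivative_continuous by blast
      have ed: "(e has_derivative (\<lambda>k. ((1 / \<gamma>) *\<^sub>R ((y - \<gamma> *\<^sub>R grad f y) - p (y - \<gamma> *\<^sub>R grad f y))) \<bullet> k))
               (at (y - \<gamma> *\<^sub>R grad f y))"
        by (rule moreau_deriv[OF gpos e_def e_min pc])
      have "((\<lambda>y. f y - \<gamma> / 2 * (grad f y \<bullet> grad f y) + e (y - \<gamma> *\<^sub>R grad f y)) has_derivative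
           (\<lambda>h. ((1 / \<gamma>) *\<^sub>R (y - p (y - \<gamma> *\<^sub>R grad f y))) \<bullet> ((mat 1 - \<gamma> *\<^sub>R hess f y) *v h))) (at y)"
      proof -
        have fdy: "(f has_derivative (\<lambda>h. grad f y \<bullet> h)) (at y)" using grad_hasderiv fdS yS by blast
        have gdy: "(grad f has_derivative (\<lambda>h. hess f y *v h)) (at y)" using hess_hasderiv gdS yS by blast
        show ?thesis by (rule phi_deriv[where f=f and e=e and p=p and x=y, OF gpos fdy gdy ed])
      qed
      then show ?thesis unfolding fbe_fun Rfb_def Tfb_def Qm_def p_def .
    qed
    have gradphi: "grad (fbe_real \<gamma> f g) y = Qm \<gamma> f y *v Rfb \<gamma> f g y" if yU: "y \<in> U" for y
    proof -
      have yS: "y \<in> S" using yU by (simp add: U_def)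
      have "Qm \<gamma> f y $ i $ j = Qm \<gamma> f y $ j $ i" for i j
        by (rule Qm_sym) (rule hsym[OF yS])
      then show ?thesis by (rule grad_of[OF phid[OF yU]])
    qed
    show "\<exists>U. open U \<and> xs \<in> U \<and>
      (\<forall>x\<in>U.
         gen_hess \<gamma> f g x =
           {(1 / \<gamma>) *\<^sub>R (Qm \<gamma> f x ** (mat 1 - Pm \<gamma> f g x ** Qm \<gamma> f x))} \<and>
         fbe_real \<gamma> f g differentiable at x \<and>
         grad (fbe_real \<gamma> f g) differentiable at x \<and>
         mat_norm (hess (fbe_real \<gamma> f g) x
                     - (1 / \<gamma>) *\<^sub>R (Qm \<gamma> f x ** (mat 1 - Pm \<gamma> f g x ** Qm \<gamma> f x)))
           = mat_norm (Mm \<gamma> f g x) \<and>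
         mat_norm (Mm \<gamma> f g x)
           \<le> \<gamma> * tensor3_norm (third f x) * norm (Rfb \<gamma> f g x))"
    proof (intro exI[of _ U] conjI ballI Uopen xsU)
      fix x assume xU: "x \<in> U"
      have xS: "x \<in> S" and zV: "x - \<gamma> *\<^sub>R grad f x \<in> V" using xU by (auto simp: U_def zz_def)
      define B where "B = (1 / \<gamma>) *\<^sub>R (Qm \<gamma> f x ** (mat 1 - Pm \<gamma> f g x ** Qm \<gamma> f x))"
      define Dh where "Dh = frechet_derivative (hess f) (at x)"
      have hD: "(hess f has_derivative Dh) (at x)" using hdS xS frechet_derivative_works unfolding Dh_def by blast
      have linD: "linear Dh" using hD has_derivative_linear by blast
      have dQ: "((\<lambda>y. Qm \<gamma> f y) has_derivative (\<lambda>h. (- \<gamma>) *\<^sub>R Dh h)) (at x)"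
      proof -
        have "((\<lambda>y. mat 1 - \<gamma> *\<^sub>R hess f y) has_derivative (\<lambda>h. 0 - \<gamma> *\<^sub>R Dh h)) (at x)"
          by (intro has_derivative_diff has_derivative_const has_derivative_scaleR_right hD)
        then show ?thesis unfolding Qm_def by simp
      qed
      have dR: "((\<lambda>y. Rfb \<gamma> f g y) has_derivative
                 (\<lambda>h. (1 / \<gamma>) *\<^sub>R (h - Pm \<gamma> f g x *v (Qm \<gamma> f x *v h)))) (at x)"
      proof -
        have "((\<lambda>y. p (y - \<gamma> *\<^sub>R grad f y)) has_derivative (\<lambda>h. Pm \<gamma> f g x *v (Qm \<gamma> f x *v h))) (at x)"
          by (rule has_derivative_compose[OF dz[OF xS] pd[OF xU]])
        then have "((\<lambda>y. (1 / \<gamma>) *\<^sub>R (y - p (y - \<gamma> *\<^sub>R grad f y))) has_derivative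
                 (\<lambda>h. (1 / \<gamma>) *\<^sub>R (h - Pm \<gamma> f g x *v (Qm \<gamma> f x *v h)))) (at x)"
          by (intro has_derivative_scaleR_right has_derivative_diff has_derivative_ident)
        then show ?thesis unfolding Rfb_def Tfb_def p_def .
      qed
      have dQR0: "((\<lambda>y. Qm \<gamma> f y *v Rfb \<gamma> f g y) has_derivative
          (\<lambda>h. Qm \<gamma> f x *v ((1 / \<gamma>) *\<^sub>R (h - Pm \<gamma> f g x *v (Qm \<gamma> f x *v h)))
               + ((- \<gamma>) *\<^sub>R Dh h) *v Rfb \<gamma> f g x)) (at x)"
        using bounded_bilinear.FDERIV[OF bb_mv dQ dR] by simp
      have th: "third f x i j k = Dh (axis k 1) $ i $ j" for i j k
        unfolding Dh_def using third_eq hdS xS by blast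
      have dQR: "((\<lambda>y. Qm \<gamma> f y *v Rfb \<gamma> f g y) has_derivative (\<lambda>h. (Mm \<gamma> f g x + B) *v h)) (at x)"
      proof (rule has_derivative_eq_rhs[OF dQR0], rule ext)
        fix h
        show "Qm \<gamma> f x *v ((1 / \<gamma>) *\<^sub>R (h - Pm \<gamma> f g x *v (Qm \<gamma> f x *v h)))
               + ((- \<gamma>) *\<^sub>R Dh h) *v Rfb \<gamma> f g x = (Mm \<gamma> f g x + B) *v h"
          unfolding matrix_vector_mult_add_rdistrib B_eq B_def Mm_eq[OF linD th] Mm_def
          by (simp add: add.commute)
      qed
      have dG: "(grad (fbe_real \<gamma> f g) has_derivative (\<lambda>h. (Mm \<gamma> f g x + B) *v h)) (at x)"
        by (rule has_derivative_transform_within_open[OF dQR Uopen xU]) (simp add: gradphi)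
      have hessphi: "hess (fbe_real \<gamma> f g) x = Mm \<gamma> f g x + B"
        unfolding hess_def by (rule jac_eq[OF dG])
      have cP: "clarke_jac (prox \<gamma> g) (x - \<gamma> *\<^sub>R grad f x) = {Pm \<gamma> f g x}"
        unfolding Pm_def by (rule clarke_C1[OF Vopen zV]) (use pdV pcV in auto)
      have jz: "jacobian (\<lambda>y. y - \<gamma> *\<^sub>R grad f y) (at y) = Qm \<gamma> f y" if "y \<in> S" for y
        using jac_eq[OF dz[OF that]] .
      have hcS: "continuous_on S (hess f)"
        using hdS by (intro continuous_at_imp_continuous_on) (auto intro: differentiable_imp_continuous_within)
      have cQ: "clarke_jac (\<lambda>y. y - \<gamma> *\<^sub>R grad f y) x = {Qm \<gamma> f x}"
      proof -
        have "continuous_on S (\<lambda>y. Qm \<gamma> f y)" unfolding Qm_def by (intro continuous_intros hcS)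
        then have "continuous_on S (\<lambda>y. jacobian (\<lambda>y. y - \<gamma> *\<^sub>R grad f y) (at y))"
          using jz by (simp cong: continuous_on_cong)
        moreover have "\<forall>y\<in>S. (\<lambda>y. y - \<gamma> *\<^sub>R grad f y) differentiable at y"
          using dz differentiableI by blast
        ultimately have "clarke_jac (\<lambda>y. y - \<gamma> *\<^sub>R grad f y) x = {jacobian (\<lambda>y. y - \<gamma> *\<^sub>R grad f y) (at x)}"
          by (intro clarke_C1[OF Sopen xS])
        then show ?thesis using jz[OF xS] by simp
      qed
      show "gen_hess \<gamma> f g x = {(1 / \<gamma>) *\<^sub>R (Qm \<gamma> f x ** (mat 1 - Pm \<gamma> f g x ** Qm \<gamma> f x))}"
        unfolding gen_hess_def cP cQ by blast
      show "fbe_real \<gamma> f g differentiable at x" using phid[OF xU] differentiableI by blast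
      show "grad (fbe_real \<gamma> f g) differentiable at x" using dG differentiableI by blast
      show "mat_norm (hess (fbe_real \<gamma> f g) x
                     - (1 / \<gamma>) *\<^sub>R (Qm \<gamma> f x ** (mat 1 - Pm \<gamma> f g x ** Qm \<gamma> f x)))
           = mat_norm (Mm \<gamma> f g x)"
      proof -
        have hB: "hess (fbe_real \<gamma> f g) x - B = Mm \<gamma> f g x" unfolding hessphi by (rule add_diff_cancel)
        show ?thesis using arg_cong[OF hB, of mat_norm] unfolding B_def .
      qed
      show "mat_norm (Mm \<gamma> f g x) \<le> \<gamma> * tensor3_norm (third f x) * norm (Rfb \<gamma> f g x)"
        unfolding Mm_def by (rule Mnorm_bound) (use gpos in simp)
    qed
  qed
qed

end
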